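(* Consider the decoupled system \[ \begin{aligned} \frac{dS}{dt}&= B-\beta S(t)\int_{t_0}^{h_1} f_{T_1}(s)e^{-\mu_v s}G(I(t-s))\,ds-\mu S(t)+\alpha\int_{t_0}^{\infty} f_{T_3}(r)I(t-r)e^{-\mu r}\,dr,\\ \frac{dI}{dt}&= \beta\int_{t_0}^{h_2} f_{T_2}(u)S(t-u)\int_{t_0}^{h_1} f_{T_1}(s)e^{-\mu_v s-\mu u}G(I(t-s-u))\,ds\,du-(\mu+d+\alpha)I(t), \end{aligned} \] (the $S$ and $I$ equations of the full SEIRS system with additionally $E'=\beta S\int f_{T_1}(s)e^{-\mu_v s}G(I(t-s))ds-\mu E-\beta\int\!\!\int f_{T_2}(u)f_{T_1}(s)S(t-u)e^{-\mu_v s-\mu u}G(I(t-s-u))dsdu$ and $R'=\alpha I-\mu R-\alpha\int f_{T_3}(r)I(t-r)e^{-\mu r}dr$), with initial data $\varphi_k\in UC_g$, $\varphi_k(t_0)>0$, and consider positive solutions lying in $D^{expl}(\infty)=\{Y\in\mathbb{R}^4_+:\ \frac{B}{\mu+d}\le S+E+I+R\le\frac{B}{\mu}\}$. Let $R_0^*=\frac{\beta}{\mu+d+\alpha}$ and $E(e^{-(\mu_vT_1+\mu T_2)})=\int_{t_0}^{h_2}\int_{t_0}^{h_1}e^{-\mu_v s-\mu u}f_{T_2}(u)f_{T_1}(s)\,ds\,du$, and suppose that either (1) $R_0^*\ge1$ and $E(e^{-(\mu_vT_1+\mu T_2)})<\frac{1}{R_0^*}$, or (2) $R_0^*<1$.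 Then in $D^{expl}(\infty)$ the susceptible state satisfies \[ \lim_{t\to\infty}\frac{1}{t}\int_{t_0}^{t}S(\xi)\,d\xi=\frac{B}{\mu}\equiv1 . \]
   Context: Constants: $t_0\ge0$, $h_1,h_2>0$, $B,\beta,\mu,\mu_v,\alpha>0$, $d\ge0$, with $B/\mu=1$. $T_1,T_2,T_3$ are random delays with probability densities $f_{T_1}$ on $[t_0,h_1]$, $f_{T_2}$ on $[t_0,h_2]$, $f_{T_3}$ on $[t_0,\infty)$. $G:[0,\infty)\to[0,\infty)$ satisfies: (A1) $G(0)=0$; (A2) strictly monotonic; (A3) $G\in C^2$, $G''<0$; (A4) $\lim_{I\to\infty}G(I)=C\in[0,\infty)$; (A5) $G(I)\le I$ for $I>0$; (A6) $\left(\frac{G(x)}{x}-\frac{G(y)}{y}\right)(G(x)-G(y))\le0$ for $x,y\ge0$. $UC_g$ is the space of continuous $\varphi:(-\infty,t_0]\to\mathbb{R}_+$ with $\sup_{t\le t_0}|\varphi(t)|/g(t)<\infty$ and $|\varphi|/g$ uniformly continuous, for a continuous non-increasing $g\ge1$ with $g(t_0)=1$, $\lim_{u\to t_0^-}g(t+u)/g(t)=1$ uniformly in $t\ge t_0$, $\lim_{t\to-\infty}g(t)=\infty$. *)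

theory Defs
  imports "HOL-Analysis.Analysis"
begin

definition UCg_weight :: "real \<Rightarrow> (real \<Rightarrow> real) \<Rightarrow> bool" where
  "UCg_weight t0 g \<longleftrightarrow>
     continuous_on {..t0} g \<and>
     (\<forall>x y. x \<le> y \<and> y \<le> t0 \<longrightarrow> g y \<le> g x) \<and>
     (\<forall>t\<le>t0. 1 \<le> g t) \<and> g t0 = 1 \<and>
     (\<forall>\<epsilon>>0. \<exists>\<delta>>0. \<forall>u. -\<delta> < u \<and> u < 0 \<longrightarrow>
          (\<forall>t\<le>t0. \<bar>g (t + u) / g t - 1\<bar> < \<epsilon>)) \<and>
     filterlim g at_top at_bot"

definition UCg :: "real \<Rightarrow> (real \<Rightarrow> real) \<Rightarrow> (real \<Rightarrow> real) \<Rightarrow> bool" where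
  "UCg t0 g \<phi> \<longleftrightarrow>
     continuous_on {..t0} \<phi> \<and> (\<forall>t\<le>t0. 0 \<le> \<phi> t) \<and>
     bounded ((\<lambda>t. \<bar>\<phi> t\<bar> / g t) ` {..t0}) \<and>
     uniformly_continuous_on {..t0} (\<lambda>t. \<bar>\<phi> t\<bar> / g t)"

definition density_on :: "real set \<Rightarrow> (real \<Rightarrow> real) \<Rightarrow> bool" where
  "density_on A f \<longleftrightarrow> (\<forall>s\<in>A. 0 \<le> f s) \<and> (f has_integral 1) A"

text \<open>Assumptions (A1)--(A6) on G. (A6) is imposed for x, y > 0, since G(x)/x is
  undefined at x = 0.\<close>
definition G_admissible :: "(real \<Rightarrow> real) \<Rightarrow> bool" where
  "G_admissible G \<longleftrightarrow>
     (\<forall>x\<ge>0. 0 \<le> G x) \<and>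
     G 0 = 0 \<and>
     strict_mono_on {0..} G \<and>
     (\<exists>G' G''. (\<forall>x\<ge>0. (G has_real_derivative G' x) (at x within {0..}) \<and>
                        (G' has_real_derivative G'' x) (at x within {0..}) \<and>
                        G'' x < 0) \<and> continuous_on {0..} G'') \<and>
     (\<exists>C\<ge>0. (G \<longlongrightarrow> C) at_top) \<and>
     (\<forall>x>0. G x \<le> x) \<and>
     (\<forall>x>0. \<forall>y>0. (G x / x - G y / y) * (G x - G y) \<le> 0)"

definition incid1 :: "real \<Rightarrow> real \<Rightarrow> (real \<Rightarrow> real) \<Rightarrow> real \<Rightarrow> (real \<Rightarrow> real)
                      \<Rightarrow> (real \<Rightarrow> real) \<Rightarrow> real \<Rightarrow> real" where
  "incid1 t0 h1 fT1 mu_v G I t =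
     integral {t0..h1} (\<lambda>s. fT1 s * exp (- mu_v * s) * G (I (t - s)))"

definition incid2_inner :: "real \<Rightarrow> real \<Rightarrow> (real \<Rightarrow> real) \<Rightarrow> real \<Rightarrow> real \<Rightarrow> (real \<Rightarrow> real)
                      \<Rightarrow> (real \<Rightarrow> real) \<Rightarrow> real \<Rightarrow> real \<Rightarrow> real" where
  "incid2_inner t0 h1 fT1 mu_v mu G I t u =
     integral {t0..h1} (\<lambda>s. fT1 s * exp (- mu_v * s - mu * u) * G (I (t - s - u)))"

definition incid2 :: "real \<Rightarrow> real \<Rightarrow> real \<Rightarrow> (real \<Rightarrow> real) \<Rightarrow> (real \<Rightarrow> real) \<Rightarrow> real \<Rightarrow> real
                      \<Rightarrow> (real \<Rightarrow> real) \<Rightarrow> (real \<Rightarrow> real) \<Rightarrow> (real \<Rightarrow> real) \<Rightarrow> real \<Rightarrow> real" where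
  "incid2 t0 h1 h2 fT1 fT2 mu_v mu G S I t =
     integral {t0..h2} (\<lambda>u. fT2 u * S (t - u) * incid2_inner t0 h1 fT1 mu_v mu G I t u)"

definition recov3 :: "real \<Rightarrow> (real \<Rightarrow> real) \<Rightarrow> real \<Rightarrow> (real \<Rightarrow> real) \<Rightarrow> real \<Rightarrow> real" where
  "recov3 t0 fT3 mu I t = integral {t0..} (\<lambda>r. fT3 r * I (t - r) * exp (- mu * r))"

definition SEIRS_solution ::
  "real \<Rightarrow> real \<Rightarrow> real \<Rightarrow> real \<Rightarrow> real \<Rightarrow> real \<Rightarrow> real \<Rightarrow> real \<Rightarrow> real
   \<Rightarrow> (real \<Rightarrow> real) \<Rightarrow> (real \<Rightarrow> real) \<Rightarrow> (real \<Rightarrow> real) \<Rightarrow> (real \<Rightarrow> real)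
   \<Rightarrow> (real \<Rightarrow> real) \<Rightarrow> (real \<Rightarrow> real) \<Rightarrow> (real \<Rightarrow> real) \<Rightarrow> (real \<Rightarrow> real) \<Rightarrow> bool"
  where
  "SEIRS_solution t0 h1 h2 B beta mu mu_v alpha d fT1 fT2 fT3 G S E I R \<longleftrightarrow>
    (\<forall>t\<ge>t0.
       (\<lambda>s. fT1 s * exp (- mu_v * s) * G (I (t - s))) integrable_on {t0..h1} \<and>
       (\<forall>u\<in>{t0..h2}. (\<lambda>s. fT1 s * exp (- mu_v * s - mu * u) * G (I (t - s - u)))
                          integrable_on {t0..h1}) \<and>
       (\<lambda>u. fT2 u * S (t - u) * incid2_inner t0 h1 fT1 mu_v mu G I t u) integrable_on {t0..h2} \<and>
       (\<lambda>r. fT3 r * I (t - r) * exp (- mu * r)) integrable_on {t0..} \<and>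
       (S has_real_derivative
          (B - beta * S t * incid1 t0 h1 fT1 mu_v G I t - mu * S t
             + alpha * recov3 t0 fT3 mu I t)) (at t within {t0..}) \<and>
       (E has_real_derivative
          (beta * S t * incid1 t0 h1 fT1 mu_v G I t - mu * E t
             - beta * incid2 t0 h1 h2 fT1 fT2 mu_v mu G S I t)) (at t within {t0..}) \<and>
       (I has_real_derivative
          (beta * incid2 t0 h1 h2 fT1 fT2 mu_v mu G S I t - (mu + d + alpha) * I t))
          (at t within {t0..}) \<and>
       (R has_real_derivative
          (alpha * I t - mu * R t - alpha * recov3 t0 fT3 mu I t)) (at t within {t0..}))"

definition D_expl :: "real \<Rightarrow> real \<Rightarrow> real \<Rightarrow> real \<Rightarrow> real \<Rightarrow> real \<Rightarrow> real \<Rightarrow> bool" where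
  "D_expl B mu d s e i r \<longleftrightarrow> 0 \<le> s \<and> 0 \<le> e \<and> 0 \<le> i \<and> 0 \<le> r \<and>
      B / (mu + d) \<le> s + e + i + r \<and> s + e + i + r \<le> B / mu"

definition R0_star :: "real \<Rightarrow> real \<Rightarrow> real \<Rightarrow> real \<Rightarrow> real" where
  "R0_star beta mu d alpha = beta / (mu + d + alpha)"

definition exp_moment :: "real \<Rightarrow> real \<Rightarrow> real \<Rightarrow> (real \<Rightarrow> real) \<Rightarrow> (real \<Rightarrow> real)
                          \<Rightarrow> real \<Rightarrow> real \<Rightarrow> real" where
  "exp_moment t0 h1 h2 fT1 fT2 mu_v mu =
     integral {t0..h2} (\<lambda>u. integral {t0..h1} (\<lambda>s. exp (- mu_v * s - mu * u) * fT2 u * fT1 s))"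

end

theory Submission
  imports Defs "HOL-Real_Asymp.Real_Asymp"
begin

lemma dens_exp_integrable:
  fixes f :: "real \<Rightarrow> real"
  assumes "(f has_integral 1) {a..b}" "\<forall>s\<in>{a..b}. 0 \<le> f s"
  shows "(\<lambda>s. f s * exp (c * s)) integrable_on {a..b}"
proof -
  have fa: "f absolutely_integrable_on {a..b}"
    using assms by (intro nonnegative_absolutely_integrable_1) auto
  have cont: "continuous_on {a..b} (\<lambda>s. exp (c * s))" by (intro continuous_intros)
  have "(\<lambda>s. exp (c * s) * f s) absolutely_integrable_on {a..b}"
    apply (rule absolutely_integrable_bounded_measurable_product_real)
    using continuous_imp_measurable_on_sets_lebesgue[OF cont] fa
      compact_continuous_image[OF cont] compact_imp_bounded by auto
  then show ?thesis
    by (simp add: mult.commute absolutely_integrable_on_def)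
qed

lemma comp_upper:
  fixes f f' :: "real \<Rightarrow> real"
  assumes "t0 < T" "c > 0"
    and D: "\<And>x. x \<ge> T \<Longrightarrow> (f has_real_derivative f' x) (at x within {t0..})"
    and ineq: "\<And>x. x \<ge> T \<Longrightarrow> f' x \<le> a - c * f x" and "T \<le> t"
  shows "f t \<le> a/c + (f T - a/c) * exp (-c*(t-T))"
proof -
  define h where "h x = (f x - a/c) * exp (c*(x-T))" for x
  have "h t \<le> h T"
  proof (rule DERIV_nonpos_imp_nonincreasing[OF \<open>T \<le> t\<close>])
    fix x assume x: "T \<le> x" "x \<le> t"
    have "at x within {t0..} = at x"
      using x assms(1) by (intro at_within_interior) auto
    then have Df: "(f has_real_derivative f' x) (at x)" using D[of x] x by simp
    have "(h has_real_derivative (f' x * exp (c*(x-T)) + (f x - a/c) * (exp (c*(x-T)) * c))) (at x)"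
      unfolding h_def
      by (rule derivative_eq_intros Df | simp)+
    moreover have "f' x * exp (c*(x-T)) + (f x - a/c) * (exp (c*(x-T)) * c)
        = (f' x + c * f x - a) * exp (c*(x-T))"
      using assms(2) by (simp add: field_simps)
    moreover have "(f' x + c * f x - a) * exp (c*(x-T)) \<le> 0"
      using ineq[of x] x by (intro mult_nonpos_nonneg) auto
    ultimately show "\<exists>y. (h has_real_derivative y) (at x) \<and> y \<le> 0" by auto
  qed
  then have "(f t - a/c) * exp (c*(t-T)) \<le> f T - a/c" by (simp add: h_def)
  then have "(f t - a/c) * exp (c*(t-T)) * exp (-c*(t-T)) \<le> (f T - a/c) * exp (-c*(t-T))"
    by (intro mult_right_mono) auto
  then have "(f t - a/c) \<le> (f T - a/c) * exp (-c*(t-T))"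
    by (simp add: mult.assoc exp_add[symmetric])
  then show ?thesis by simp
qed

lemma comp_lower:
  fixes f f' :: "real \<Rightarrow> real"
  assumes "t0 < T" "c > 0"
    and D: "\<And>x. x \<ge> T \<Longrightarrow> (f has_real_derivative f' x) (at x within {t0..})"
    and ineq: "\<And>x. x \<ge> T \<Longrightarrow> f' x \<ge> a - c * f x" and "T \<le> t"
  shows "f t \<ge> a/c + (f T - a/c) * exp (-c*(t-T))"
proof -
  have D2: "\<And>x. x \<ge> T \<Longrightarrow> ((\<lambda>x. - f x) has_real_derivative (- f' x)) (at x within {t0..})"
    using D by (auto intro!: derivative_eq_intros)
  have I2: "\<And>x. x \<ge> T \<Longrightarrow> - f' x \<le> (-a) - c * (- f x)"
    using ineq by force
  have "(- f t) \<le> (-a)/c + ((- f T) - (-a)/c) * exp (-c*(t-T))"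
    using comp_upper[where f="\<lambda>x. - f x" and f'="\<lambda>x. - f' x", OF assms(1,2) D2 I2 assms(5)] by simp
  then show ?thesis by (simp add: field_simps)
qed

theorem theorem5:
  fixes t0 h1 h2 B beta mu mu_v alpha d :: real
    and fT1 fT2 fT3 G g \<phi>1 \<phi>2 \<phi>3 \<phi>4 S E I R :: "real \<Rightarrow> real"
  assumes "t0 \<ge> 0" "h1 > 0" "h2 > 0"
    and "B > 0" "beta > 0" "mu > 0" "mu_v > 0" "alpha > 0" "d \<ge> 0"
    and "B / mu = 1"
    and "density_on {t0..h1} fT1" "density_on {t0..h2} fT2" "density_on {t0..} fT3"
    and "G_admissible G"
    and "UCg_weight t0 g"
    and "UCg t0 g \<phi>1" "UCg t0 g \<phi>2" "UCg t0 g \<phi>3" "UCg t0 g \<phi>4"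
    and "\<phi>1 t0 > 0" "\<phi>2 t0 > 0" "\<phi>3 t0 > 0" "\<phi>4 t0 > 0"
    and "\<forall>t\<le>t0. S t = \<phi>1 t \<and> E t = \<phi>2 t \<and> I t = \<phi>3 t \<and> R t = \<phi>4 t"
    and "SEIRS_solution t0 h1 h2 B beta mu mu_v alpha d fT1 fT2 fT3 G S E I R"
    and "\<forall>t\<ge>t0. S t > 0 \<and> E t > 0 \<and> I t > 0 \<and> R t > 0"
    and "\<forall>t\<ge>t0. D_expl B mu d (S t) (E t) (I t) (R t)"
    and "(R0_star beta mu d alpha \<ge> 1 \<and>
           exp_moment t0 h1 h2 fT1 fT2 mu_v mu < 1 / R0_star beta mu d alpha)
         \<or> R0_star beta mu d alpha < 1"
  shows "((\<lambda>t. (1 / t) * integral {t0..t} S) \<longlongrightarrow> B / mu) at_top"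
proof -
  note dens1 = assms(11)[unfolded density_on_def]
  note dens2 = assms(12)[unfolded density_on_def]
  note Gad = assms(14)[unfolded G_admissible_def]
  note sol = assms(25)[unfolded SEIRS_solution_def]
  have Bmu: "B = mu" using assms(6,10) by (simp add: field_simps)
  define gam where "gam = mu + d + alpha"
  have gam_pos: "gam > 0" using assms(6,8,9) by (simp add: gam_def)
  have Spos: "\<And>t. t \<ge> t0 \<Longrightarrow> S t > 0" and Ipos: "\<And>t. t \<ge> t0 \<Longrightarrow> I t > 0"
    using assms(26) by auto
  have Sle1: "\<And>t. t \<ge> t0 \<Longrightarrow> S t \<le> 1" and Ile1: "\<And>t. t \<ge> t0 \<Longrightarrow> I t \<le> 1"
    using assms(26,27,10) unfolding D_expl_def by (auto dest!: spec)
  have S_nn: "0 \<le> S t" for t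
  proof (cases "t \<le> t0")
    case True then show ?thesis using assms(24,16) unfolding UCg_def by auto
  next
    case False then show ?thesis using Spos[of t] by auto
  qed
  have I_nn: "0 \<le> I t" for t
  proof (cases "t \<le> t0")
    case True then show ?thesis using assms(24,18) unfolding UCg_def by auto
  next
    case False then show ?thesis using Ipos[of t] by auto
  qed
  have Gle: "\<And>x. x > 0 \<Longrightarrow> G x \<le> x" and Gnn: "\<And>x. x \<ge> 0 \<Longrightarrow> 0 \<le> G x"
    using Gad by auto
  have f1nn: "\<And>s. s \<in> {t0..h1} \<Longrightarrow> 0 \<le> fT1 s" and f2nn: "\<And>s. s \<in> {t0..h2} \<Longrightarrow> 0 \<le> fT2 s"
    using dens1 dens2 by auto
  have f1int: "fT1 integrable_on {t0..h1}" and f2int: "fT2 integrable_on {t0..h2}"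
    using dens1 dens2 by auto
  have f1i: "integral {t0..h1} fT1 = 1" and f2i: "integral {t0..h2} fT2 = 1"
    using dens1 dens2 by (auto intro: integral_unique)
  define c1 where "c1 = integral {t0..h1} (\<lambda>s. fT1 s * exp (- mu_v * s))"
  define c2 where "c2 = integral {t0..h2} (\<lambda>u. fT2 u * exp (- mu * u))"
  have c1int: "(\<lambda>s. fT1 s * exp (- mu_v * s)) integrable_on {t0..h1}"
    using dens_exp_integrable[of fT1 t0 h1 "- mu_v"] dens1 by auto
  have c2int: "(\<lambda>u. fT2 u * exp (- mu * u)) integrable_on {t0..h2}"
    using dens_exp_integrable[of fT2 t0 h2 "- mu"] dens2 by auto
  have c1nn: "0 \<le> c1" unfolding c1_def
    by (rule integral_nonneg[OF c1int]) (use f1nn in auto)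
  have c2nn: "0 \<le> c2" unfolding c2_def
    by (rule integral_nonneg[OF c2int]) (use f2nn in auto)
  have c1le: "c1 \<le> 1"
  proof -
    have "c1 \<le> integral {t0..h1} fT1" unfolding c1_def
    proof (rule integral_le[OF c1int f1int])
      fix s assume s: "s \<in> {t0..h1}"
      then have "exp (- mu_v * s) \<le> 1" using assms(1,7) by auto
      then show "fT1 s * exp (- mu_v * s) \<le> fT1 s"
        using f1nn[OF s] by (simp add: mult_left_le)
    qed
    then show ?thesis using f1i by simp
  qed
  have c2le: "c2 \<le> 1"
  proof -
    have "c2 \<le> integral {t0..h2} fT2" unfolding c2_def
    proof (rule integral_le[OF c2int f2int])
      fix s assume s: "s \<in> {t0..h2}"
      then have "exp (- mu * s) \<le> 1" using assms(1,6) by auto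
      then show "fT2 s * exp (- mu * s) \<le> fT2 s"
        using f2nn[OF s] by (simp add: mult_left_le)
    qed
    then show ?thesis using f2i by simp
  qed
  have expsplit: "\<And>s u. exp (- mu_v * s - mu * u) = exp (- mu_v * s) * exp (- mu * u)"
    by (simp add: exp_add[symmetric])
  define EM where "EM = exp_moment t0 h1 h2 fT1 fT2 mu_v mu"
  have EM_eq: "EM = c1 * c2"
  proof -
    have "\<And>u. integral {t0..h1} (\<lambda>s. exp (- mu_v * s - mu * u) * fT2 u * fT1 s)
       = (fT2 u * exp (- mu * u)) * c1"
    proof -
      fix u
      have "(\<lambda>s. exp (- mu_v * s - mu * u) * fT2 u * fT1 s)
          = (\<lambda>s. (fT2 u * exp (- mu * u)) * (fT1 s * exp (- mu_v * s)))"
        unfolding expsplit by (simp add: mult_ac)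
      then show "integral {t0..h1} (\<lambda>s. exp (- mu_v * s - mu * u) * fT2 u * fT1 s)
       = (fT2 u * exp (- mu * u)) * c1" by (simp add: c1_def)
    qed
    then show ?thesis unfolding EM_def exp_moment_def c2_def by simp
  qed
  have EMnn: "0 \<le> EM" and EMle: "EM \<le> 1"
    using EM_eq c1nn c2nn c1le c2le by (auto simp: mult_le_one)
  define k where "k = beta * EM"
  have k_nn: "0 \<le> k" using EMnn assms(5) by (simp add: k_def)
  have k_lt: "k < gam"
  proof -
    have R0: "R0_star beta mu d alpha = beta / gam" by (simp add: R0_star_def gam_def)
    show ?thesis
    proof (cases "R0_star beta mu d alpha < 1")
      case True
      then have "beta < gam" using R0 gam_pos by (simp add: field_simps)
      moreover have "beta * EM \<le> beta" using EMle assms(5) by simp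
      ultimately show ?thesis by (simp add: k_def)
    next
      case False
      then have "EM < gam / beta" using assms(28) R0 by (simp add: EM_def)
      then show ?thesis using assms(5) by (simp add: k_def field_simps)
    qed
  qed
  have inc2: "incid2 t0 h1 h2 fT1 fT2 mu_v mu G S I t \<le> m * EM"
    if m0: "m \<ge> 0" and mI: "\<forall>x\<ge>T. I x \<le> m" and T0: "T \<ge> t0" and tT: "t \<ge> T + h1 + h2" for m T t
  proof -
    have tt0: "t \<ge> t0" using tT T0 assms(2,3) by linarith
    have inner: "incid2_inner t0 h1 fT1 mu_v mu G I t u \<le> m * (exp (- mu * u) * c1)"
      if u: "u \<in> {t0..h2}" for u
    proof -
      have "incid2_inner t0 h1 fT1 mu_v mu G I t u
          = integral {t0..h1} (\<lambda>s. fT1 s * exp (- mu_v * s - mu * u) * G (I (t - s - u)))"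
        by (simp add: incid2_inner_def)
      also have "\<dots> \<le> integral {t0..h1} (\<lambda>s. (m * exp (- mu * u)) * (fT1 s * exp (- mu_v * s)))"
      proof (rule integral_le)
        show "(\<lambda>s. fT1 s * exp (- mu_v * s - mu * u) * G (I (t - s - u))) integrable_on {t0..h1}"
          using sol tt0 u by blast
        show "(\<lambda>s. (m * exp (- mu * u)) * (fT1 s * exp (- mu_v * s))) integrable_on {t0..h1}"
          by (rule integrable_on_mult_right[OF c1int])
      next
        fix s assume s: "s \<in> {t0..h1}"
        have "t - s - u \<ge> T" using s u tT by auto
        then have Ip: "I (t - s - u) > 0" and Im: "I (t - s - u) \<le> m"
          using Ipos[of "t - s - u"] T0 mI by auto
        have "G (I (t - s - u)) \<le> m" using Gle[OF Ip] Im by linarith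
        then have "fT1 s * exp (- mu_v * s - mu * u) * G (I (t - s - u))
            \<le> fT1 s * exp (- mu_v * s - mu * u) * m"
          using f1nn[OF s] by (intro mult_left_mono) auto
        then show "fT1 s * exp (- mu_v * s - mu * u) * G (I (t - s - u))
            \<le> (m * exp (- mu * u)) * (fT1 s * exp (- mu_v * s))"
          unfolding expsplit by (simp add: mult_ac)
      qed
      also have "\<dots> = m * (exp (- mu * u) * c1)" by (simp add: c1_def)
      finally show ?thesis .
    qed
    have "incid2 t0 h1 h2 fT1 fT2 mu_v mu G S I t
        = integral {t0..h2} (\<lambda>u. fT2 u * S (t - u) * incid2_inner t0 h1 fT1 mu_v mu G I t u)"
      by (simp add: incid2_def)
    also have "\<dots> \<le> integral {t0..h2} (\<lambda>u. (m * c1) * (fT2 u * exp (- mu * u)))"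
    proof (rule integral_le)
      show "(\<lambda>u. fT2 u * S (t - u) * incid2_inner t0 h1 fT1 mu_v mu G I t u) integrable_on {t0..h2}"
        using sol tt0 by blast
      show "(\<lambda>u. (m * c1) * (fT2 u * exp (- mu * u))) integrable_on {t0..h2}"
        by (rule integrable_on_mult_right[OF c2int])
    next
      fix u assume u: "u \<in> {t0..h2}"
      have "t - u \<ge> t0" using u tT T0 assms(2) by auto
      then have S1: "S (t - u) \<le> 1" using Sle1 by auto
      have y0: "0 \<le> m * (exp (- mu * u) * c1)" using m0 c1nn by simp
      have "S (t - u) * incid2_inner t0 h1 fT1 mu_v mu G I t u \<le> S (t - u) * (m * (exp (- mu * u) * c1))"
        using inner[OF u] S_nn by (intro mult_left_mono) auto
      also have "\<dots> \<le> m * (exp (- mu * u) * c1)"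
        using S1 y0 S_nn[of "t - u"] mult_left_le_one_le by blast
      finally have "fT2 u * (S (t - u) * incid2_inner t0 h1 fT1 mu_v mu G I t u) \<le> fT2 u * (m * (exp (- mu * u) * c1))"
        using f2nn[OF u] by (intro mult_left_mono) auto
      then show "fT2 u * S (t - u) * incid2_inner t0 h1 fT1 mu_v mu G I t u \<le> (m * c1) * (fT2 u * exp (- mu * u))"
        by (simp add: mult_ac)
    qed
    also have "\<dots> = m * EM" by (simp add: c2_def EM_eq mult_ac)
    finally show ?thesis .
  qed
  have inc1: "incid1 t0 h1 fT1 mu_v G I t \<le> m"
    if m0: "m \<ge> 0" and mI: "\<forall>x\<ge>T. I x \<le> m" and T0: "T \<ge> t0" and tT: "t \<ge> T + h1" for m T t
  proof -
    have tt0: "t \<ge> t0" using tT T0 assms(2) by linarith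
    have "incid1 t0 h1 fT1 mu_v G I t = integral {t0..h1} (\<lambda>s. fT1 s * exp (- mu_v * s) * G (I (t - s)))"
      by (simp add: incid1_def)
    also have "\<dots> \<le> integral {t0..h1} (\<lambda>s. m * fT1 s)"
    proof (rule integral_le)
      show "(\<lambda>s. fT1 s * exp (- mu_v * s) * G (I (t - s))) integrable_on {t0..h1}"
        using sol tt0 by blast
      show "(\<lambda>s. m * fT1 s) integrable_on {t0..h1}"
        by (rule integrable_on_mult_right[OF f1int])
    next
      fix s assume s: "s \<in> {t0..h1}"
      have "t - s \<ge> T" using s tT by auto
      then have Ip: "I (t - s) > 0" and Im: "I (t - s) \<le> m"
        using Ipos[of "t - s"] T0 mI by auto
      have G1: "G (I (t - s)) \<le> m" using Gle[OF Ip] Im by linarith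
      have G0: "0 \<le> G (I (t - s))" using Gnn Ip by auto
      have e1: "exp (- mu_v * s) \<le> 1" using s assms(1,7) by auto
      have "exp (- mu_v * s) * G (I (t - s)) \<le> 1 * m"
        using e1 G1 G0 m0 by (intro mult_mono) auto
      then have "fT1 s * (exp (- mu_v * s) * G (I (t - s))) \<le> fT1 s * m"
        using f1nn[OF s] by (intro mult_left_mono) auto
      then show "fT1 s * exp (- mu_v * s) * G (I (t - s)) \<le> m * fT1 s"
        by (simp add: mult_ac)
    qed
    also have "\<dots> = m" using f1i by simp
    finally show ?thesis .
  qed
  have rec_nn: "0 \<le> recov3 t0 fT3 mu I t" if "t \<ge> t0" for t
    unfolding recov3_def
    apply (rule integral_nonneg)
    using sol that apply blast
    using assms(13) I_nn unfolding density_on_def by auto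
  define r where "r = k / gam"
  have r_nn: "0 \<le> r" and r_lt: "r < 1" using k_nn k_lt gam_pos by (auto simp: r_def field_simps)
  define q where "q = (1 + r) / 2"
  have q_pos: "0 < q" and q_lt: "q < 1" using r_nn r_lt by (auto simp: q_def)
  have DI: "\<And>x. x \<ge> t0 \<Longrightarrow> (I has_real_derivative
          (beta * incid2 t0 h1 h2 fT1 fT2 mu_v mu G S I x - gam * I x)) (at x within {t0..})"
    using sol by (simp add: gam_def)
  have DS: "\<And>x. x \<ge> t0 \<Longrightarrow> (S has_real_derivative
          (B - beta * S x * incid1 t0 h1 fT1 mu_v G I x - mu * S x
             + alpha * recov3 t0 fT3 mu I x)) (at x within {t0..})"
    using sol by blast
  have step: "\<exists>T'\<ge>t0+1. \<forall>t\<ge>T'. I t \<le> q * m"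
    if m0: "m > 0" and T0: "T \<ge> t0 + 1" and mI: "\<forall>t\<ge>T. I t \<le> m" for m T
  proof -
    define T1 where "T1 = T + h1 + h2"
    have T1gt: "t0 < T1" using T0 assms(2,3) by (simp add: T1_def)
    have bnd: "I t \<le> r * m + exp (- gam * (t - T1))" if tT1: "t \<ge> T1" for t
    proof -
      have "I t \<le> (k*m)/gam + (I T1 - (k*m)/gam) * exp (- gam * (t - T1))"
      proof (rule comp_upper[OF T1gt gam_pos _ _ tT1])
        fix x assume x: "x \<ge> T1"
        then show "(I has_real_derivative
          (beta * incid2 t0 h1 h2 fT1 fT2 mu_v mu G S I x - gam * I x)) (at x within {t0..})"
          using DI T1gt by auto
        have "incid2 t0 h1 h2 fT1 fT2 mu_v mu G S I x \<le> m * EM"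
          using inc2[of m T x] m0 mI T0 x by (auto simp: T1_def)
        then have "beta * incid2 t0 h1 h2 fT1 fT2 mu_v mu G S I x \<le> beta * (m * EM)"
          using assms(5) by simp
        then show "beta * incid2 t0 h1 h2 fT1 fT2 mu_v mu G S I x - gam * I x \<le> k * m - gam * I x"
          by (simp add: k_def mult_ac)
      qed
      also have "\<dots> \<le> r * m + exp (- gam * (t - T1))"
      proof -
        have "(k*m)/gam = r * m" by (simp add: r_def)
        moreover have "(I T1 - (k*m)/gam) * exp (- gam * (t - T1)) \<le> 1 * exp (- gam * (t - T1))"
        proof (rule mult_right_mono)
          have "0 \<le> (k*m)/gam" using k_nn m0 gam_pos by simp
          then show "I T1 - (k*m)/gam \<le> 1" using Ile1[of T1] T1gt by simp
        qed simp
        ultimately show ?thesis by simp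
      qed
      finally show ?thesis .
    qed
    have lim: "((\<lambda>t. exp (- gam * (t - T1))) \<longlongrightarrow> 0) at_top"
      using gam_pos by real_asymp
    have "(1 - r) * m / 2 > 0" using r_lt m0 by simp
    from order_tendstoD(2)[OF lim this]
    have "eventually (\<lambda>t. exp (- gam * (t - T1)) < (1 - r) * m / 2) at_top" .
    moreover have "eventually (\<lambda>t. t \<ge> T1) at_top" by (rule eventually_ge_at_top)
    ultimately have "eventually (\<lambda>t. I t \<le> q * m) at_top"
    proof eventually_elim
      case (elim t)
      then have "I t \<le> r * m + (1 - r) * m / 2" using bnd[of t] by linarith
      then show ?case by (simp add: q_def field_simps)
    qed
    then obtain T' where "\<forall>t\<ge>T'. I t \<le> q * m" by (auto simp: eventually_at_top_linorder)
    then show ?thesis by (intro exI[of _ "max T' (t0+1)"]) auto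
  qed
  have iter: "\<exists>T\<ge>t0+1. \<forall>t\<ge>T. I t \<le> q ^ n" for n
  proof (induction n)
    case 0
    show ?case using Ile1 by (intro exI[of _ "t0+1"]) auto
  next
    case (Suc n)
    then obtain T where "T \<ge> t0 + 1" "\<forall>t\<ge>T. I t \<le> q ^ n" by auto
    from step[OF _ this] q_pos show ?case by simp
  qed
  have Ismall: "\<exists>T\<ge>t0+1. \<forall>t\<ge>T. I t \<le> \<eta>" if "\<eta> > 0" for \<eta>
  proof -
    obtain n where "q ^ n < \<eta>" using real_arch_pow_inv[OF \<open>\<eta> > 0\<close> q_lt] by auto
    with iter[of n] show ?thesis by force
  qed
  have Slow: "eventually (\<lambda>t. a < S t) at_top" if a1: "a < 1" for a
  proof -
    define \<epsilon> where "\<epsilon> = 1 - a"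
    have e0: "\<epsilon> > 0" using a1 by (simp add: \<epsilon>_def)
    define \<eta> where "\<eta> = \<epsilon> * mu / (2 * beta)"
    have eta0: "\<eta> > 0" using e0 assms(5,6) by (simp add: \<eta>_def)
    obtain T where T0: "T \<ge> t0 + 1" and TI: "\<forall>t\<ge>T. I t \<le> \<eta>" using Ismall[OF eta0] by auto
    define T1 where "T1 = T + h1"
    have T1gt: "t0 < T1" using T0 assms(2) by (simp add: T1_def)
    define c where "c = beta * \<eta> + mu"
    have c0: "c > 0" using eta0 assms(5,6) by (simp add: c_def add_pos_pos)
    have bnd: "S t \<ge> mu / c - exp (- c * (t - T1))" if tT1: "t \<ge> T1" for t
    proof -
      have "S t \<ge> mu/c + (S T1 - mu/c) * exp (- c * (t - T1))"
      proof (rule comp_lower[OF T1gt c0 _ _ tT1])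
        fix x assume x: "x \<ge> T1"
        then show "(S has_real_derivative
          (B - beta * S x * incid1 t0 h1 fT1 mu_v G I x - mu * S x
             + alpha * recov3 t0 fT3 mu I x)) (at x within {t0..})"
          using DS T1gt by auto
        have "incid1 t0 h1 fT1 mu_v G I x \<le> \<eta>"
          using inc1[of \<eta> T x] eta0 TI T0 x by (auto simp: T1_def)
        then have "S x * incid1 t0 h1 fT1 mu_v G I x \<le> S x * \<eta>"
          using S_nn by (intro mult_left_mono) auto
        then have "beta * (S x * incid1 t0 h1 fT1 mu_v G I x) \<le> beta * (S x * \<eta>)"
          using assms(5) by simp
        moreover have "0 \<le> alpha * recov3 t0 fT3 mu I x"
          using rec_nn[of x] x T1gt assms(8) by simp
        ultimately show "mu - c * S x \<le> B - beta * S x * incid1 t0 h1 fT1 mu_v G I x - mu * S x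
             + alpha * recov3 t0 fT3 mu I x"
          by (simp add: Bmu c_def algebra_simps)
      qed
      moreover have "(S T1 - mu/c) * exp (- c * (t - T1)) \<ge> - exp (- c * (t - T1))"
      proof -
        have "mu / c \<le> 1" using c0 eta0 assms(5) by (simp add: c_def)
        then have "S T1 - mu/c \<ge> -1" using S_nn[of T1] by linarith
        then have "(S T1 - mu/c) * exp (- c * (t - T1)) \<ge> (-1) * exp (- c * (t - T1))"
          by (intro mult_right_mono) auto
        then show ?thesis by simp
      qed
      ultimately show ?thesis by linarith
    qed
    have muc: "mu / c \<ge> 1 - \<epsilon> / 2"
    proof -
      have "beta * \<eta> = \<epsilon> * mu / 2" using assms(5) by (simp add: \<eta>_def)
      then have cc: "c = mu * (1 + \<epsilon>/2)" by (simp add: c_def algebra_simps)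
      have "(1 - \<epsilon>/2) * (1 + \<epsilon>/2) \<le> 1" by (simp add: algebra_simps)
      then have "mu * ((1 - \<epsilon>/2) * (1 + \<epsilon>/2)) \<le> mu * 1" using assms(6)
        by (intro mult_left_mono) auto
      then have "(1 - \<epsilon>/2) * (mu * (1 + \<epsilon>/2)) \<le> mu"
        by (simp add: mult_ac)
      then have "(1 - \<epsilon>/2) * c \<le> mu" using cc by simp
      then show ?thesis using c0 by (simp add: pos_le_divide_eq)
    qed
    have lim: "((\<lambda>t. exp (- c * (t - T1))) \<longlongrightarrow> 0) at_top"
      using c0 by real_asymp
    from order_tendstoD(2)[OF lim, of "\<epsilon>/2"] e0
    have "eventually (\<lambda>t. exp (- c * (t - T1)) < \<epsilon>/2) at_top" by simp
    moreover have "eventually (\<lambda>t. t \<ge> T1) at_top" by (rule eventually_ge_at_top)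
    ultimately show ?thesis
    proof eventually_elim
      case (elim t)
      then have "mu / c - exp (- c * (t - T1)) \<le> S t" using bnd[of t] by blast
      then show ?case using elim muc \<epsilon>_def by linarith
    qed
  qed
  have Slim: "(S \<longlongrightarrow> 1) at_top"
  proof (rule order_tendstoI)
    fix a :: real assume "a < 1" then show "eventually (\<lambda>t. a < S t) at_top" by (rule Slow)
  next
    fix a :: real assume a: "a > 1"
    have "eventually (\<lambda>t. t \<ge> t0) at_top" by (rule eventually_ge_at_top)
    then show "eventually (\<lambda>t. S t < a) at_top"
      by eventually_elim (use Sle1 a in force)
  qed
  have Scont: "continuous_on {t0..} S"
    unfolding continuous_on_eq_continuous_within
    using DS by (auto intro: DERIV_continuous)
  have DF: "((\<lambda>x. integral {t0..x} S) has_real_derivative S t) (at t)" if t: "t > t0" for t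
  proof -
    have "continuous_on {t0..t+1} S" using continuous_on_subset[OF Scont] by auto
    from integral_has_real_derivative[OF this, of t] t
    have "((\<lambda>x. integral {t0..x} S) has_real_derivative S t) (at t within {t0..t+1})" by auto
    moreover have "at t within {t0..t+1} = at t" using t by (intro at_within_interior) auto
    ultimately show ?thesis by simp
  qed
  have "((\<lambda>x. integral {t0..x} S / x) \<longlongrightarrow> 1) at_top"
  proof (rule lhospital_at_top_at_top[where f'=S and g'="\<lambda>_. 1"])
    show "LIM x at_top. x :> at_top" by (rule filterlim_ident)
    show "eventually (\<lambda>x. (1::real) \<noteq> 0) at_top" by simp
    have "eventually (\<lambda>x. x > t0) at_top" by (rule eventually_gt_at_top)
    then show "eventually (\<lambda>x. ((\<lambda>x. integral {t0..x} S) has_real_derivative S x) (at x)) at_top"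
      by eventually_elim (rule DF)
    show "eventually (\<lambda>x. ((\<lambda>x. x) has_real_derivative 1) (at x)) at_top"
      by (auto intro!: derivative_eq_intros)
    show "((\<lambda>x. S x / 1) \<longlongrightarrow> 1) at_top" using Slim by simp
  qed
  then show ?thesis using assms(10) by simp
qed

end
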